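(* Let $\lambda\neq0$ be a constant and let $\phi(x,t)$ be a smooth function with $\phi_x\neq0$ satisfying $\{\phi;x\}_t+\frac4\lambda\big(\frac{\phi_t}{\phi_x}\big)_x=0$. Let $p=\frac{\phi_t}{\lambda\phi_x}$, $U=\frac12\{\phi;x\}+\frac1\lambda$, let $A,B$ be constants not both zero, and let $V=\frac{A\phi+B}{\sqrt{\phi_x}}$ on a region where $A\phi+B\neq0$. Define $$\widetilde U=U+2(\log V)_{xx},\qquad \widetilde p=\frac{\phi_t}{\lambda\phi_x}-\Big(\log\frac{A\phi+B}{\sqrt{\phi_x}}\Big)_{xt}.$$ Then $1/V$ solves the system $$W_{xx}+\Big(\widetilde U-\frac1\lambda\Big)W=0,\qquad W_t=\lambda\Big(\widetilde pW_x-\frac12\widetilde p_xW\Big).$$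
   Context: The Schwarzian derivative of a function $\phi(x,t)$ with $\phi_x\neq0$ is $\{\phi;x\}=\frac{\phi_{xxx}}{\phi_x}-\frac32\frac{\phi_{xx}^2}{\phi_x^2}$. All functions are smooth. *)

theory Defs
  imports "HOL-Analysis.Analysis"
begin

definition dx :: "(real \<times> real \<Rightarrow> real) \<Rightarrow> real \<times> real \<Rightarrow> real" where
  "dx f = (\<lambda>(x, t). deriv (\<lambda>y. f (y, t)) x)"

definition dt :: "(real \<times> real \<Rightarrow> real) \<Rightarrow> real \<times> real \<Rightarrow> real" where
  "dt f = (\<lambda>(x, t). deriv (\<lambda>s. f (x, s)) t)"

text \<open>Iterated partial derivative: True = d/dx, False = d/dt (applied right to left).\<close>
fun pd :: "bool list \<Rightarrow> (real \<times> real \<Rightarrow> real) \<Rightarrow> real \<times> real \<Rightarrow> real" where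
  "pd [] f = f"
| "pd (b # bs) f = (if b then dx else dt) (pd bs f)"

definition smooth_on :: "(real \<times> real) set \<Rightarrow> (real \<times> real \<Rightarrow> real) \<Rightarrow> bool" where
  "smooth_on S f \<longleftrightarrow> open S \<and> (\<forall>ws. pd ws f differentiable_on S)"

definition schwarzian :: "(real \<times> real \<Rightarrow> real) \<Rightarrow> real \<times> real \<Rightarrow> real" where
  "schwarzian \<phi> = (\<lambda>z. dx (dx (dx \<phi>)) z / dx \<phi> z - 3/2 * (dx (dx \<phi>) z / dx \<phi> z)^2)"

end

theory Submission
  imports Defs
begin


lemma sec_x:
  assumes "(f has_derivative D) (at (x,t))"
  shows "((\<lambda>y. f (y,t)) has_real_derivative D (1,0)) (at x)"
proof -
  have bl: "bounded_linear D" using assms by (rule has_derivative_bounded_linear)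
  have "((\<lambda>y. (y,t)) has_derivative (\<lambda>h. (h,0))) (at x)"
    by (auto intro!: derivative_eq_intros)
  from has_derivative_compose[OF this assms]
  have "((\<lambda>y. f (y,t)) has_derivative (\<lambda>h. D (h,0))) (at x)" by simp
  moreover have "(\<lambda>h. D (h,0)) = (*) (D (1,0))"
  proof
    fix h :: real
    have "D (h,0) = D (h *\<^sub>R (1,0))" by simp
    also have "\<dots> = h *\<^sub>R D (1,0)" by (rule linear_cmul[OF bounded_linear.linear[OF bl]])
    finally show "D (h,0) = D (1,0) * h" by simp
  qed
  ultimately show ?thesis by (simp add: has_field_derivative_def)
qed

lemma sec_t:
  assumes "(f has_derivative D) (at (x,t))"
  shows "((\<lambda>s. f (x,s)) has_real_derivative D (0,1)) (at t)"
proof -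
  have bl: "bounded_linear D" using assms by (rule has_derivative_bounded_linear)
  have "((\<lambda>s. (x,s)) has_derivative (\<lambda>h. (0,h))) (at t)"
    by (auto intro!: derivative_eq_intros)
  from has_derivative_compose[OF this assms]
  have "((\<lambda>s. f (x,s)) has_derivative (\<lambda>h. D (0,h))) (at t)" by simp
  moreover have "(\<lambda>h. D (0,h)) = (*) (D (0,1))"
  proof
    fix h :: real
    have "D (0,h) = D (h *\<^sub>R (0,1))" by simp
    also have "\<dots> = h *\<^sub>R D (0,1)" by (rule linear_cmul[OF bounded_linear.linear[OF bl]])
    finally show "D (0,h) = D (0,1) * h" by simp
  qed
  ultimately show ?thesis by (simp add: has_field_derivative_def)
qed

lemma dx_eq: "((\<lambda>y. f (y,t)) has_real_derivative D) (at x) \<Longrightarrow> dx f (x,t) = D"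
  unfolding dx_def by (simp add: DERIV_imp_deriv)

lemma dt_eq: "((\<lambda>s. f (x,s)) has_real_derivative D) (at t) \<Longrightarrow> dt f (x,t) = D"
  unfolding dt_def by (simp add: DERIV_imp_deriv)

lemma dx_D: "(f has_derivative D) (at (x,t)) \<Longrightarrow> dx f (x,t) = D (1,0)"
  by (rule dx_eq[OF sec_x])

lemma dt_D: "(f has_derivative D) (at (x,t)) \<Longrightarrow> dt f (x,t) = D (0,1)"
  by (rule dt_eq[OF sec_t])

lemma dx_at:
  assumes "f differentiable (at (x,t))"
  shows "((\<lambda>y. f (y,t)) has_real_derivative dx f (x,t)) (at x)"
proof -
  obtain D where D: "(f has_derivative D) (at (x,t))" using assms unfolding differentiable_def by blast
  show ?thesis using sec_x[OF D] dx_D[OF D] by simp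
qed

lemma dt_at:
  assumes "f differentiable (at (x,t))"
  shows "((\<lambda>s. f (x,s)) has_real_derivative dt f (x,t)) (at t)"
proof -
  obtain D where D: "(f has_derivative D) (at (x,t))" using assms unfolding differentiable_def by blast
  show ?thesis using sec_t[OF D] dt_D[OF D] by simp
qed

lemma dx_cong:
  assumes "open N" "(x,t) \<in> N" "\<And>w. w \<in> N \<Longrightarrow> f w = g w"
  shows "dx f (x,t) = dx g (x,t)"
proof -
  have o: "open ((\<lambda>y. (y,t)) -` N)"
    by (rule open_vimage[OF assms(1)]) (auto intro!: continuous_intros)
  have "eventually (\<lambda>y. y \<in> (\<lambda>y. (y,t)) -` N) (nhds x)"
    using o assms(2) by (intro eventually_nhds_in_open) auto
  hence "eventually (\<lambda>y. f (y,t) = g (y,t)) (nhds x)"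
    by (rule eventually_mono) (auto intro: assms(3))
  thus ?thesis unfolding dx_def by (simp add: deriv_cong_ev)
qed

lemma dt_cong:
  assumes "open N" "(x,t) \<in> N" "\<And>w. w \<in> N \<Longrightarrow> f w = g w"
  shows "dt f (x,t) = dt g (x,t)"
proof -
  have o: "open ((\<lambda>s. (x,s)) -` N)"
    by (rule open_vimage[OF assms(1)]) (auto intro!: continuous_intros)
  have "eventually (\<lambda>s. s \<in> (\<lambda>s. (x,s)) -` N) (nhds t)"
    using o assms(2) by (intro eventually_nhds_in_open) auto
  hence "eventually (\<lambda>s. f (x,s) = g (x,s)) (nhds t)"
    by (rule eventually_mono) (auto intro: assms(3))
  thus ?thesis unfolding dt_def by (simp add: deriv_cong_ev)
qed

lemma mvt_sym:
  fixes g g' :: "real \<Rightarrow> real"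
  assumes "h \<noteq> 0" "\<And>y. \<bar>y - a\<bar> \<le> \<bar>h\<bar> \<Longrightarrow> (g has_real_derivative g' y) (at y)"
  shows "\<exists>\<xi>. \<bar>\<xi> - a\<bar> \<le> \<bar>h\<bar> \<and> g (a+h) - g a = h * g' \<xi>"
proof (cases "h > 0")
  case True
  have "\<exists>z. a < z \<and> z < a + h \<and> g (a+h) - g a = (a + h - a) * g' z"
    by (rule MVT2) (use True in \<open>auto intro!: assms(2)\<close>)
  then show ?thesis by (metis True abs_of_pos add_diff_cancel_left' less_eq_real_def diff_less_eq add.commute abs_le_iff diff_gt_0_iff_gt less_diff_eq)
next
  case False
  then have hn: "h < 0" using assms(1) by simp
  have "\<exists>z. a + h < z \<and> z < a \<and> g a - g (a+h) = (a - (a + h)) * g' z"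
    by (rule MVT2) (use hn in \<open>auto intro!: assms(2)\<close>)
  then obtain z where "a + h < z" "z < a" "g a - g (a+h) = (a - (a + h)) * g' z" by blast
  then show ?thesis by (intro exI[of _ z]) (auto simp: abs_if algebra_simps)
qed




lemma lin_split:
  fixes D :: "real \<times> real \<Rightarrow> real" and u v :: real
  assumes "bounded_linear D"
  shows "D (u, v) = D (u, 0) + v * D (0, 1)" "D (u, v) = u * D (1, 0) + D (0, v)"
proof -
  have l: "linear D" using assms by (rule bounded_linear.linear)
  have "D (u,v) = D ((u,0) + v *\<^sub>R (0,1))" by simp
  also have "\<dots> = D (u,0) + v *\<^sub>R D (0,1)" using l by (simp only: linear_add linear_cmul)
  finally show "D (u, v) = D (u, 0) + v * D (0, 1)" by simp
  have "D (u,v) = D (u *\<^sub>R (1,0) + (0,v))" by simp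
  also have "\<dots> = u *\<^sub>R D (1,0) + D (0,v)" using l by (simp only: linear_add linear_cmul)
  finally show "D (u, v) = u * D (1, 0) + D (0, v)" by simp
qed

lemma clairaut:
  assumes S: "open S" and z: "(a,b) \<in> S" and f: "f differentiable_on S"
    and fx: "dx f differentiable_on S" and ft: "dt f differentiable_on S"
  shows "dt (dx f) (a,b) = dx (dt f) (a,b)"
proof (rule ccontr)
  assume ne: "dt (dx f) (a,b) \<noteq> dx (dt f) (a,b)"
  define F where "F = dx f"
  define G where "G = dt f"
  have "F differentiable (at (a,b))" using fx z S unfolding F_def
    by (simp add: differentiable_on_eq_differentiable_at)
  then obtain DF where DF: "(F has_derivative DF) (at (a,b))" unfolding differentiable_def by blast
  have "G differentiable (at (a,b))" using ft z S unfolding G_def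
    by (simp add: differentiable_on_eq_differentiable_at)
  then obtain DG where DG: "(G has_derivative DG) (at (a,b))" unfolding differentiable_def by blast
  have blF: "bounded_linear DF" using DF by (rule has_derivative_bounded_linear)
  have blG: "bounded_linear DG" using DG by (rule has_derivative_bounded_linear)
  define Ft where "Ft = DF (0,1)"
  define Gx where "Gx = DG (1,0)"
  have FtE: "dt (dx f) (a,b) = Ft" unfolding Ft_def F_def[symmetric] by (rule dt_D[OF DF])
  have GxE: "dx (dt f) (a,b) = Gx" unfolding Gx_def G_def[symmetric] by (rule dx_D[OF DG])
  define d where "d = \<bar>Ft - Gx\<bar>"
  have dpos: "d > 0" using ne FtE GxE d_def by auto
  define e where "e = d / 12"
  have epos: "e > 0" using dpos e_def by simp
  obtain d1 where d1: "d1 > 0" "\<And>y. norm (y - (a,b)) < d1 \<Longrightarrow>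
      norm (F y - F (a,b) - DF (y - (a,b))) \<le> e * norm (y - (a,b))"
    using DF epos unfolding has_derivative_within_alt by blast
  obtain d2 where d2: "d2 > 0" "\<And>y. norm (y - (a,b)) < d2 \<Longrightarrow>
      norm (G y - G (a,b) - DG (y - (a,b))) \<le> e * norm (y - (a,b))"
    using DG epos unfolding has_derivative_within_alt by blast
  obtain r where r: "r > 0" "ball (a,b) r \<subseteq> S" using S z open_contains_ball by blast
  define h where "h = min r (min d1 d2) / 4"
  have hpos: "h > 0" using r d1 d2 h_def by simp
  have near: "norm ((a+u, b+v) - (a,b)) \<le> 2*h" if "\<bar>u\<bar> \<le> h" "\<bar>v\<bar> \<le> h" for u v
  proof -
    have "norm ((a+u, b+v) - (a,b)) = norm (u,v)" by simp
    also have "\<dots> \<le> norm u + norm v" by (rule norm_Pair_le)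
    finally show ?thesis using that by simp
  qed
  have inS: "(a+u, b+v) \<in> S" if "\<bar>u\<bar> \<le> h" "\<bar>v\<bar> \<le> h" for u v
  proof -
    have "dist (a,b) (a+u,b+v) = norm ((a+u, b+v) - (a,b))" by (metis dist_commute dist_norm)
    then have "dist (a,b) (a+u,b+v) < r" using near[OF that] hpos h_def by simp
    then show ?thesis using r by auto
  qed
  have difat: "f differentiable (at (a+u, b+v))" if "\<bar>u\<bar> \<le> h" "\<bar>v\<bar> \<le> h" for u v
    using f inS[OF that] S by (simp add: differentiable_on_eq_differentiable_at)
  have ltd1: "norm ((a+u, b+v) - (a,b)) < d1" if "\<bar>u\<bar> \<le> h" "\<bar>v\<bar> \<le> h" for u v
    using near[OF that] hpos h_def by simp
  have ltd2: "norm ((a+u, b+v) - (a,b)) < d2" if "\<bar>u\<bar> \<le> h" "\<bar>v\<bar> \<le> h" for u v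
    using near[OF that] hpos h_def by simp
  define \<Delta> where "\<Delta> = f (a+h, b+h) - f (a+h, b) - f (a, b+h) + f (a,b)"
  obtain \<xi> where xi: "\<bar>\<xi> - a\<bar> \<le> h"
    "(f (a+h, b+h) - f (a+h, b)) - (f (a, b+h) - f (a, b)) = h * (F (\<xi>, b+h) - F (\<xi>, b))"
  proof -
    have "\<exists>\<xi>. \<bar>\<xi> - a\<bar> \<le> \<bar>h\<bar> \<and> (\<lambda>y. f (y, b+h) - f (y, b)) (a+h) - (\<lambda>y. f (y, b+h) - f (y, b)) a
          = h * (\<lambda>y. F (y, b+h) - F (y, b)) \<xi>"
    proof (rule mvt_sym)
      show "h \<noteq> 0" using hpos by simp
      fix y assume y: "\<bar>y - a\<bar> \<le> \<bar>h\<bar>"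
      have d1': "f differentiable (at (y, b+h))" using difat[of "y-a" h] y hpos by simp
      have d2': "f differentiable (at (y, b))" using difat[of "y-a" 0] y hpos by simp
      show "((\<lambda>y. f (y, b+h) - f (y, b)) has_real_derivative F (y, b+h) - F (y, b)) (at y)"
        unfolding F_def by (intro derivative_intros dx_at d1' d2')
    qed
    then show ?thesis using that hpos by auto
  qed
  have e1: "\<bar>F (\<xi>, b+h) - F (a,b) - DF (\<xi> - a, h)\<bar> \<le> e * (2*h)"
  proof -
    have "\<bar>F (\<xi>, b+h) - F (a,b) - DF (\<xi> - a, h)\<bar> \<le> e * norm ((a + (\<xi>-a), b+h) - (a,b))"
      using d1(2)[OF ltd1[of "\<xi>-a" h]] xi(1) hpos by simp
    also have "\<dots> \<le> e * (2*h)" using near[of "\<xi>-a" h] xi(1) hpos epos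
      by (intro mult_left_mono) auto
    finally show ?thesis .
  qed
  have e2: "\<bar>F (\<xi>, b) - F (a,b) - DF (\<xi> - a, 0)\<bar> \<le> e * (2*h)"
  proof -
    have "\<bar>F (\<xi>, b) - F (a,b) - DF (\<xi> - a, 0)\<bar> \<le> e * norm ((a + (\<xi>-a), b+0) - (a,b))"
      using d1(2)[OF ltd1[of "\<xi>-a" 0]] xi(1) hpos by simp
    also have "\<dots> \<le> e * (2*h)" using near[of "\<xi>-a" 0] xi(1) hpos epos
      by (intro mult_left_mono) auto
    finally show ?thesis .
  qed
  have splitF: "DF (\<xi> - a, h) = DF (\<xi> - a, 0) + h * Ft" unfolding Ft_def by (rule lin_split(1)[OF blF])
  have bx: "\<bar>\<Delta> - h*h*Ft\<bar> \<le> h * (4*e*h)"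
  proof -
    have "\<Delta> - h*h*Ft = h * ((F (\<xi>, b+h) - F (a,b) - DF (\<xi> - a, h)) - (F (\<xi>, b) - F (a,b) - DF (\<xi> - a, 0)))"
      using xi(2) splitF unfolding \<Delta>_def by (simp add: algebra_simps)
    also have "\<bar>\<dots>\<bar> \<le> h * (4*e*h)" using e1 e2 hpos
      by (simp add: abs_mult)
    finally show ?thesis .
  qed
  obtain \<eta> where eta: "\<bar>\<eta> - b\<bar> \<le> h"
    "(f (a+h, b+h) - f (a, b+h)) - (f (a+h, b) - f (a, b)) = h * (G (a+h, \<eta>) - G (a, \<eta>))"
  proof -
    have "\<exists>\<eta>. \<bar>\<eta> - b\<bar> \<le> \<bar>h\<bar> \<and> (\<lambda>s. f (a+h, s) - f (a, s)) (b+h) - (\<lambda>s. f (a+h, s) - f (a, s)) b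
          = h * (\<lambda>s. G (a+h, s) - G (a, s)) \<eta>"
    proof (rule mvt_sym)
      show "h \<noteq> 0" using hpos by simp
      fix s assume s: "\<bar>s - b\<bar> \<le> \<bar>h\<bar>"
      have d1': "f differentiable (at (a+h, s))" using difat[of h "s-b"] s hpos by simp
      have d2': "f differentiable (at (a, s))" using difat[of 0 "s-b"] s hpos by simp
      show "((\<lambda>s. f (a+h, s) - f (a, s)) has_real_derivative G (a+h, s) - G (a, s)) (at s)"
        unfolding G_def by (intro derivative_intros dt_at d1' d2')
    qed
    then show ?thesis using that hpos by auto
  qed
  have g1: "\<bar>G (a+h, \<eta>) - G (a,b) - DG (h, \<eta> - b)\<bar> \<le> e * (2*h)"
  proof -
    have "\<bar>G (a+h, \<eta>) - G (a,b) - DG (h, \<eta> - b)\<bar> \<le> e * norm ((a + h, b+(\<eta>-b)) - (a,b))"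
      using d2(2)[OF ltd2[of h "\<eta>-b"]] eta(1) hpos by simp
    also have "\<dots> \<le> e * (2*h)" using near[of h "\<eta>-b"] eta(1) hpos epos
      by (intro mult_left_mono) auto
    finally show ?thesis .
  qed
  have g2: "\<bar>G (a, \<eta>) - G (a,b) - DG (0, \<eta> - b)\<bar> \<le> e * (2*h)"
  proof -
    have "\<bar>G (a, \<eta>) - G (a,b) - DG (0, \<eta> - b)\<bar> \<le> e * norm ((a + 0, b+(\<eta>-b)) - (a,b))"
      using d2(2)[OF ltd2[of 0 "\<eta>-b"]] eta(1) hpos by simp
    also have "\<dots> \<le> e * (2*h)" using near[of 0 "\<eta>-b"] eta(1) hpos epos
      by (intro mult_left_mono) auto
    finally show ?thesis .
  qed
  have splitG: "DG (h, \<eta> - b) = h * Gx + DG (0, \<eta> - b)" unfolding Gx_def by (rule lin_split(2)[OF blG])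
  have bt: "\<bar>\<Delta> - h*h*Gx\<bar> \<le> h * (4*e*h)"
  proof -
    have "\<Delta> - h*h*Gx = h * ((G (a+h, \<eta>) - G (a,b) - DG (h, \<eta> - b)) - (G (a, \<eta>) - G (a,b) - DG (0, \<eta> - b)))"
      using eta(2) splitG unfolding \<Delta>_def by (simp add: algebra_simps)
    also have "\<bar>\<dots>\<bar> \<le> h * (4*e*h)" using g1 g2 hpos
      by (simp add: abs_mult)
    finally show ?thesis .
  qed
  have "h*h*\<bar>Ft - Gx\<bar> \<le> h * (8*e*h)"
  proof -
    have "\<bar>(\<Delta> - h*h*Gx) - (\<Delta> - h*h*Ft)\<bar> = \<bar>(h*h)*(Ft - Gx)\<bar>"
      by (simp add: algebra_simps)
    then have "h*h*\<bar>Ft - Gx\<bar> = \<bar>(\<Delta> - h*h*Gx) - (\<Delta> - h*h*Ft)\<bar>" using hpos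
      by (simp add: abs_mult)
    also have "\<dots> \<le> \<bar>\<Delta> - h*h*Gx\<bar> + \<bar>\<Delta> - h*h*Ft\<bar>" by (rule abs_triangle_ineq4)
    also have "\<dots> \<le> h * (8*e*h)" using bx bt by simp
    finally show ?thesis .
  qed
  then have "h*h*d \<le> h*h*(8*e)" unfolding d_def by (simp add: algebra_simps)
  then have "d \<le> 8*e" using hpos by (simp add: mult_le_cancel_left_pos)
  then show False using dpos e_def by simp
qed




lemma alg1:
  fixes \<sigma> q c p1 p2 p3 A lam :: real
  assumes sg: "\<sigma> = 1 \<or> \<sigma> = -1" and q: "q \<noteq> 0" and c: "c \<noteq> 0" and p1: "p1 = \<sigma> * q^2"
  shows "(\<sigma>*p3/(2*q*c) - \<sigma>*p2*(\<sigma>*p2*c/q + 2*q*A*p1)/(4*q^2*c^2)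
          - A*(\<sigma>*p2*p1/(2*q*c^2) + q*p2/c^2 - 2*A*q*p1^2/c^3))
        + ((1/2*(p3/p1 - 3/2*(p2/p1)^2) + 1/lam + 2*(A*p2/c - A^2*p1^2/c^2 - p3/(2*p1) + p2^2/(2*p1^2))) - 1/lam) * (q/c) = 0"
  using sg
proof
  assume "\<sigma> = 1" then show ?thesis using q c unfolding p1
    by (simp add: field_simps power2_eq_square power3_eq_cube)
next
  assume "\<sigma> = -1" then show ?thesis using q c unfolding p1
    by (simp add: field_simps power2_eq_square power3_eq_cube)
qed

lemma alg2:
  fixes \<sigma> q c p1 p2 p3 pt p1t p2t p3t A lam :: real
  assumes sg: "\<sigma> = 1 \<or> \<sigma> = -1" and q: "q \<noteq> 0" and c: "c \<noteq> 0" and lam: "lam \<noteq> 0"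
    and p1: "p1 = \<sigma> * q^2"
  shows "(\<sigma>*p1t/(2*q*c) - A*q*pt/c^2) - lam * ((pt/(lam*p1) - (A*p1t/c - A^2*p1*pt/c^2 - p2t/(2*p1) + p2*p1t/(2*p1^2)))
            * (\<sigma>*p2/(2*q*c) - A*q*p1/c^2)
          - 1/2 * ((p1t*p1 - pt*p2)/(lam*p1^2) - (A*p2t/c - A^2*p1*p1t/c^2 - A^2*(p2*pt+p1*p1t)/c^2 + 2*A^3*p1^2*pt/c^3 - p3t/(2*p1) + p2t*p2/(2*p1^2) + (p3*p1t+p2*p2t)/(2*p1^2) - p2^2*p1t/p1^3)) * (q/c))
       = lam/4 * ((p3t/p1 - p3*p1t/p1^2 - 3*(p2/p1)*(p2t*p1-p2*p1t)/p1^2) + 4/lam*((p1t*p1-pt*p2)/p1^2)) * (q/c)"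
  using sg
proof
  assume "\<sigma> = 1" then show ?thesis using q c lam unfolding p1
    by (simp add: field_simps power2_eq_square power3_eq_cube)
next
  assume "\<sigma> = -1" then show ?thesis using q c lam unfolding p1
    by (simp add: field_simps power2_eq_square power3_eq_cube)
qed

lemma algE2:
  fixes \<sigma> q c p1 p2 A :: real
  assumes sg: "\<sigma> = 1 \<or> \<sigma> = -1" and q: "q \<noteq> 0" and c: "c \<noteq> 0" and p1: "p1 = \<sigma> * q^2"
  shows "(A*p1*q - c*(\<sigma>*p2/(2*q)))/q^2/(c/q) = A*p1/c - p2/(2*p1)"
  using sg
proof
  assume "\<sigma> = 1" then show ?thesis using q c unfolding p1
    by (simp add: field_simps power2_eq_square)
next
  assume "\<sigma> = -1" then show ?thesis using q c unfolding p1
    by (simp add: field_simps power2_eq_square)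
qed




lemma sqrt_comp:
  assumes g: "(g has_real_derivative g') (at y)" and pos: "\<sigma> * g y > 0" and sg: "\<sigma> = 1 \<or> \<sigma> = -1"
  shows "((\<lambda>y. sqrt (g y)) has_real_derivative \<sigma> * g' / (2 * sqrt (g y))) (at y)"
proof -
  have "DERIV sqrt (g y) :> \<sigma> * inverse (sqrt (g y)) / 2"
    by (rule DERIV_real_sqrt_generic) (use pos sg in auto)
  from DERIV_chain2[OF this g] show ?thesis by (simp add: field_simps)
qed

lemma ln_abs_deriv:
  fixes u :: real
  assumes "u \<noteq> 0"
  shows "DERIV (\<lambda>v. ln \<bar>v\<bar>) u :> 1 / u"
proof (cases "u > 0")
  case True
  have ev: "eventually (\<lambda>v. ln \<bar>v\<bar> = ln v) (nhds u)"
    using eventually_nhds_in_open[of "{0<..}" u] True by (auto elim!: eventually_mono)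
  have "DERIV ln u :> 1 / u" using True by (rule DERIV_ln_divide)
  then show ?thesis by (rule DERIV_cong_ev[OF refl ev refl, THEN iffD2])
next
  case False
  then have n: "u < 0" using assms by simp
  have ev: "eventually (\<lambda>v. ln \<bar>v\<bar> = ln (- v)) (nhds u)"
    using eventually_nhds_in_open[of "{..<0}" u] n by (auto elim!: eventually_mono)
  have "DERIV (\<lambda>v. ln (- v)) u :> 1 / u" using n
    by (auto intro!: derivative_eq_intros simp: field_simps)
  then show ?thesis by (rule DERIV_cong_ev[OF refl ev refl, THEN iffD2])
qed

lemma lnabs_comp:
  assumes g: "(g has_real_derivative g') (at y)" and nz: "g y \<noteq> 0"
  shows "((\<lambda>y. ln \<bar>g y\<bar>) has_real_derivative g' / g y) (at y)"
  using DERIV_chain2[OF ln_abs_deriv[OF nz] g] by simp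




theorem mainTheorem7:
  fixes \<phi> :: "real \<times> real \<Rightarrow> real" and S :: "(real \<times> real) set"
    and lam A B :: real
  assumes smooth: "smooth_on S \<phi>"
    and lam: "lam \<noteq> 0"
    and phix: "\<forall>z\<in>S. dx \<phi> z \<noteq> 0"
    and pde: "\<forall>z\<in>S. dt (schwarzian \<phi>) z + 4 / lam * dx (\<lambda>w. dt \<phi> w / dx \<phi> w) z = 0"
    and AB: "A \<noteq> 0 \<or> B \<noteq> 0"
    and nz: "\<forall>z\<in>S. A * \<phi> z + B \<noteq> 0"
  defines "V \<equiv> (\<lambda>z. (A * \<phi> z + B) / sqrt (dx \<phi> z))"
    and "Ut \<equiv> (\<lambda>z. (1/2 * schwarzian \<phi> z + 1 / lam)
                  + 2 * dx (dx (\<lambda>w. ln \<bar>(A * \<phi> w + B) / sqrt (dx \<phi> w)\<bar>)) z)"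
    and "pt \<equiv> (\<lambda>z. dt \<phi> z / (lam * dx \<phi> z)
                  - dt (dx (\<lambda>w. ln \<bar>(A * \<phi> w + B) / sqrt (dx \<phi> w)\<bar>)) z)"
  shows "\<forall>z\<in>S. dx (dx (\<lambda>w. 1 / V w)) z + (Ut z - 1 / lam) * (1 / V z) = 0
            \<and> dt (\<lambda>w. 1 / V w) z
                = lam * (pt z * dx (\<lambda>w. 1 / V w) z - 1/2 * dx pt z * (1 / V z))"
proof (intro ballI)
  fix z assume zS: "z \<in> S"
  obtain x t where z: "z = (x,t)" by (cases z)
  have oS: "open S" using smooth by (simp add: smooth_on_def)
  have don: "\<And>ws. pd ws \<phi> differentiable_on S" using smooth by (simp add: smooth_on_def)
  have dif: "\<And>ws w. w \<in> S \<Longrightarrow> pd ws \<phi> differentiable (at w)"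
    using don oS by (simp add: differentiable_on_eq_differentiable_at)
  define P1 where "P1 = dx \<phi>"
  define P2 where "P2 = dx P1"
  define P3 where "P3 = dx P2"
  define T0 where "T0 = dt \<phi>"
  define T1 where "T1 = dt P1"
  define T2 where "T2 = dt P2"
  define T3 where "T3 = dt P3"
  have d0: "w \<in> S \<Longrightarrow> \<phi> differentiable (at w)" for w using dif[of w "[]"] by simp
  have d1: "w \<in> S \<Longrightarrow> P1 differentiable (at w)" for w using dif[of w "[True]"] by (simp add: P1_def)
  have d2: "w \<in> S \<Longrightarrow> P2 differentiable (at w)" for w using dif[of w "[True,True]"] by (simp add: P1_def P2_def)
  have d3: "w \<in> S \<Longrightarrow> P3 differentiable (at w)" for w using dif[of w "[True,True,True]"] by (simp add: P1_def P2_def P3_def)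
  have e0: "w \<in> S \<Longrightarrow> T0 differentiable (at w)" for w using dif[of w "[False]"] by (simp add: T0_def)
  have e1: "w \<in> S \<Longrightarrow> T1 differentiable (at w)" for w using dif[of w "[False,True]"] by (simp add: T1_def P1_def)
  have e2: "w \<in> S \<Longrightarrow> T2 differentiable (at w)" for w using dif[of w "[False,True,True]"] by (simp add: T2_def P2_def P1_def)
  have c0: "dx T0 (a,b) = T1 (a,b)" if "(a,b) \<in> S" for a b
    using clairaut[OF oS that don[of "[]", simplified] don[of "[True]", simplified] don[of "[False]", simplified]]
    by (simp add: T0_def T1_def P1_def)
  have c1: "dx T1 (a,b) = T2 (a,b)" if "(a,b) \<in> S" for a b
    using clairaut[OF oS that don[of "[True]", simplified] don[of "[True,True]", simplified] don[of "[False,True]", simplified]]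
    by (simp add: T1_def T2_def P1_def P2_def)
  have c2: "dx T2 (a,b) = T3 (a,b)" if "(a,b) \<in> S" for a b
    using clairaut[OF oS that don[of "[True,True]", simplified] don[of "[True,True,True]", simplified] don[of "[False,True,True]", simplified]]
    by (simp add: T2_def T3_def P1_def P2_def P3_def)
  have Xphi: "((\<lambda>y. \<phi> (y,b)) has_real_derivative P1 (a,b)) (at a)" if "(a,b) \<in> S" for a b
    unfolding P1_def by (rule dx_at[OF d0[OF that]])
  have XP1: "((\<lambda>y. P1 (y,b)) has_real_derivative P2 (a,b)) (at a)" if "(a,b) \<in> S" for a b
    unfolding P2_def by (rule dx_at[OF d1[OF that]])
  have XP2: "((\<lambda>y. P2 (y,b)) has_real_derivative P3 (a,b)) (at a)" if "(a,b) \<in> S" for a b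
    unfolding P3_def by (rule dx_at[OF d2[OF that]])
  have XT0: "((\<lambda>y. T0 (y,b)) has_real_derivative T1 (a,b)) (at a)" if "(a,b) \<in> S" for a b
    using dx_at[OF e0[OF that]] c0[OF that] by simp
  have XT1: "((\<lambda>y. T1 (y,b)) has_real_derivative T2 (a,b)) (at a)" if "(a,b) \<in> S" for a b
    using dx_at[OF e1[OF that]] c1[OF that] by simp
  have XT2: "((\<lambda>y. T2 (y,b)) has_real_derivative T3 (a,b)) (at a)" if "(a,b) \<in> S" for a b
    using dx_at[OF e2[OF that]] c2[OF that] by simp
  have Tphi: "((\<lambda>s. \<phi> (a,s)) has_real_derivative T0 (a,b)) (at b)" if "(a,b) \<in> S" for a b
    unfolding T0_def by (rule dt_at[OF d0[OF that]])
  have TP1: "((\<lambda>s. P1 (a,s)) has_real_derivative T1 (a,b)) (at b)" if "(a,b) \<in> S" for a b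
    unfolding T1_def by (rule dt_at[OF d1[OF that]])
  have TP2: "((\<lambda>s. P2 (a,s)) has_real_derivative T2 (a,b)) (at b)" if "(a,b) \<in> S" for a b
    unfolding T2_def by (rule dt_at[OF d2[OF that]])
  have TP3: "((\<lambda>s. P3 (a,s)) has_real_derivative T3 (a,b)) (at b)" if "(a,b) \<in> S" for a b
    unfolding T3_def by (rule dt_at[OF d3[OF that]])
  define \<sigma> :: real where "\<sigma> = (if P1 (x,t) > 0 then 1 else -1)"
  have sg: "\<sigma> = 1 \<or> \<sigma> = -1" by (simp add: \<sigma>_def)
  define N where "N = S \<inter> (\<lambda>w. \<sigma> * P1 w) -` {0<..}"
  have contP1: "continuous_on S (\<lambda>w. \<sigma> * P1 w)"
    using d1 by (auto intro!: continuous_intros differentiable_imp_continuous_on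
        simp: differentiable_on_eq_differentiable_at oS)
  have oN: "open N" unfolding N_def
    using continuous_open_preimage[OF contP1 oS] by auto
  have NS: "w \<in> N \<Longrightarrow> w \<in> S" for w by (simp add: N_def)
  have posN: "w \<in> N \<Longrightarrow> \<sigma> * P1 w > 0" for w by (simp add: N_def)
  have zN: "(x,t) \<in> N" using zS z phix unfolding N_def \<sigma>_def P1_def by auto
  define Q where "Q = (\<lambda>w. sqrt (P1 w))"
  have XQ: "((\<lambda>y. Q (y,b)) has_real_derivative \<sigma> * P2 (a,b) / (2 * Q (a,b))) (at a)" if "(a,b) \<in> N" for a b
    unfolding Q_def by (rule sqrt_comp[OF XP1[OF NS[OF that]] posN[OF that] sg])
  have TQ: "((\<lambda>s. Q (a,s)) has_real_derivative \<sigma> * T1 (a,b) / (2 * Q (a,b))) (at b)" if "(a,b) \<in> N" for a b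
    unfolding Q_def by (rule sqrt_comp[OF TP1[OF NS[OF that]] posN[OF that] sg])
  have Qnz: "w \<in> N \<Longrightarrow> Q w \<noteq> 0" for w using posN[of w] by (auto simp: Q_def)
  have QQ: "w \<in> N \<Longrightarrow> P1 w = \<sigma> * (Q w)^2" for w using posN[of w] sg
    by (auto simp: Q_def power2_eq_square)
  have cnz: "w \<in> N \<Longrightarrow> A * \<phi> w + B \<noteq> 0" for w using nz NS by auto
  define C where "C = (\<lambda>w. A * \<phi> w + B)"
  have XC: "((\<lambda>y. C (y,b)) has_real_derivative A * P1 (a,b)) (at a)" if "(a,b) \<in> S" for a b
    unfolding C_def by (auto intro!: derivative_eq_intros Xphi[OF that])
  have TC: "((\<lambda>s. C (a,s)) has_real_derivative A * T0 (a,b)) (at b)" if "(a,b) \<in> S" for a b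
    unfolding C_def by (auto intro!: derivative_eq_intros Tphi[OF that])
  have Cnz: "w \<in> N \<Longrightarrow> C w \<noteq> 0" for w using cnz by (simp add: C_def)
  have Wfun: "(\<lambda>w. 1 / V w) = (\<lambda>w. Q w / C w)"
    by (auto simp: V_def Q_def P1_def C_def)
  define E1 where "E1 = (\<lambda>w. \<sigma>*P2 w/(2*Q w*(C w)) - A*Q w*P1 w/(C w)^2)"
  have hE1: "dx (\<lambda>w. Q w / C w) (a,b) = E1 (a,b)" if ab: "(a,b) \<in> N" for a b
  proof (rule dx_eq)
    show "((\<lambda>y. Q (y,b) / C (y,b)) has_real_derivative E1 (a,b)) (at a)"
      using Qnz[OF ab] Cnz[OF ab]
      by (auto intro!: derivative_eq_intros XQ[OF ab] XC[OF NS[OF ab]] simp: E1_def field_simps power2_eq_square)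
  qed
  have cnz0: "C (x,t) \<noteq> 0" using Cnz[OF zN] .
  have Qnz0: "Q (x,t) \<noteq> 0" using Qnz[OF zN] .
  have P1nz: "w \<in> N \<Longrightarrow> P1 w \<noteq> 0" for w using posN[of w] by auto
  have P1nz0: "P1 (x,t) \<noteq> 0" using P1nz[OF zN] .
  have Wx: "dx (\<lambda>w. 1 / V w) (x,t) = E1 (x,t)" unfolding Wfun by (rule hE1[OF zN])
  have Wxx: "dx (dx (\<lambda>w. 1 / V w)) (x,t) = 
      \<sigma>*P3 (x,t)/(2*Q (x,t)*(C (x,t)))
      - \<sigma>*P2 (x,t)*(\<sigma>*P2 (x,t)*(C (x,t))/Q (x,t) + 2*Q (x,t)*A*P1 (x,t))/(4*Q (x,t)^2*(C (x,t))^2)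
      - A*(\<sigma>*P2 (x,t)*P1 (x,t)/(2*Q (x,t)*(C (x,t))^2) + Q (x,t)*P2 (x,t)/(C (x,t))^2
           - 2*A*Q (x,t)*P1 (x,t)^2/(C (x,t))^3)"
  proof -
    have "dx (dx (\<lambda>w. 1 / V w)) (x,t) = dx E1 (x,t)"
      unfolding Wfun by (rule dx_cong[OF oN zN]) (auto intro: hE1)
    also have "\<dots> = \<sigma>*P3 (x,t)/(2*Q (x,t)*(C (x,t)))
      - \<sigma>*P2 (x,t)*(\<sigma>*P2 (x,t)*(C (x,t))/Q (x,t) + 2*Q (x,t)*A*P1 (x,t))/(4*Q (x,t)^2*(C (x,t))^2)
      - A*(\<sigma>*P2 (x,t)*P1 (x,t)/(2*Q (x,t)*(C (x,t))^2) + Q (x,t)*P2 (x,t)/(C (x,t))^2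
           - 2*A*Q (x,t)*P1 (x,t)^2/(C (x,t))^3)"
      unfolding E1_def
      by (rule dx_eq) (use Qnz0 cnz0 in \<open>auto intro!: derivative_eq_intros XQ[OF zN] XC[OF NS[OF zN]]
            XP1[OF NS[OF zN]] XP2[OF NS[OF zN]] simp: field_simps power2_eq_square power3_eq_cube\<close>)
    finally show ?thesis .
  qed
  let ?p1 = "P1 (x,t)" and ?p2 = "P2 (x,t)" and ?p3 = "P3 (x,t)" and ?q = "Q (x,t)" and ?c = "C (x,t)"
  let ?t0 = "T0 (x,t)" and ?t1 = "T1 (x,t)" and ?t2 = "T2 (x,t)" and ?t3 = "T3 (x,t)"
  have Lfun: "(\<lambda>w. ln \<bar>(A * \<phi> w + B) / sqrt (dx \<phi> w)\<bar>) = (\<lambda>w. ln \<bar>C w / Q w\<bar>)"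
    by (simp add: C_def Q_def P1_def)
  define E2 where "E2 = (\<lambda>w. A*P1 w/C w - P2 w/(2*P1 w))"
  have hE2: "dx (\<lambda>w. ln \<bar>C w / Q w\<bar>) (a,b) = E2 (a,b)" if ab: "(a,b) \<in> N" for a b
  proof (rule dx_eq)
    have g: "((\<lambda>y. C (y,b) / Q (y,b)) has_real_derivative
        (A*P1 (a,b)*Q (a,b) - C (a,b)*(\<sigma>*P2 (a,b)/(2*Q (a,b))))/(Q (a,b))^2) (at a)"
      by (rule DERIV_cong[OF DERIV_quotient[OF XC[OF NS[OF ab]] XQ[OF ab] Qnz[OF ab]]])
        (simp add: power2_eq_square algebra_simps)
    have "C (a,b) / Q (a,b) \<noteq> 0" using Cnz[OF ab] Qnz[OF ab] by simp
    from lnabs_comp[OF g this]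
    show "((\<lambda>y. ln \<bar>C (y,b) / Q (y,b)\<bar>) has_real_derivative E2 (a,b)) (at a)"
      unfolding E2_def using algE2[OF sg Qnz[OF ab] Cnz[OF ab] QQ[OF ab]] by simp
  qed
  have hE2': "dx (\<lambda>w. ln \<bar>C w / Q w\<bar>) w = E2 w" if "w \<in> N" for w
    using hE2[of "fst w" "snd w"] that by simp
  have Lxx: "dx (dx (\<lambda>w. ln \<bar>C w / Q w\<bar>)) (x,t) = A*?p2/?c - A^2*?p1^2/?c^2 - ?p3/(2*?p1) + ?p2^2/(2*?p1^2)"
  proof -
    have "dx (dx (\<lambda>w. ln \<bar>C w / Q w\<bar>)) (x,t) = dx E2 (x,t)"
      by (rule dx_cong[OF oN zN]) (rule hE2')
    also have "\<dots> = A*?p2/?c - A^2*?p1^2/?c^2 - ?p3/(2*?p1) + ?p2^2/(2*?p1^2)"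
      unfolding E2_def
      by (rule dx_eq) (use P1nz0 cnz0 in \<open>auto intro!: derivative_eq_intros XC[OF NS[OF zN]]
            XP1[OF NS[OF zN]] XP2[OF NS[OF zN]] simp: field_simps power2_eq_square power3_eq_cube\<close>)
    finally show ?thesis .
  qed
  define E3 where "E3 = (\<lambda>w. A*T1 w/C w - A^2*P1 w*T0 w/(C w)^2 - T2 w/(2*P1 w) + P2 w*T1 w/(2*(P1 w)^2))"
  have hE3: "dt (dx (\<lambda>w. ln \<bar>C w / Q w\<bar>)) (a,b) = E3 (a,b)" if ab: "(a,b) \<in> N" for a b
  proof -
    have "dt (dx (\<lambda>w. ln \<bar>C w / Q w\<bar>)) (a,b) = dt E2 (a,b)"
      by (rule dt_cong[OF oN ab]) (rule hE2')
    also have "\<dots> = E3 (a,b)"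
      unfolding E2_def E3_def
      by (rule dt_eq) (use P1nz[OF ab] Cnz[OF ab] in \<open>auto intro!: derivative_eq_intros TC[OF NS[OF ab]]
            TP1[OF NS[OF ab]] TP2[OF NS[OF ab]] simp: field_simps power2_eq_square power3_eq_cube\<close>)
    finally show ?thesis .
  qed
  have ptN: "pt w = T0 w/(lam*P1 w) - E3 w" if w: "w \<in> N" for w
  proof -
    obtain a b where ab: "w = (a,b)" by (cases w)
    show ?thesis unfolding pt_def Lfun using hE3[of a b] w ab by (simp add: T0_def P1_def)
  qed
  have dxpt: "dx pt (x,t) = (?t1*?p1 - ?t0*?p2)/(lam*?p1^2) - (A*?t2/?c - A^2*?p1*?t1/?c^2 - A^2*(?p2*?t0+?p1*?t1)/?c^2 + 2*A^3*?p1^2*?t0/?c^3 - ?t3/(2*?p1) + ?t2*?p2/(2*?p1^2) + (?p3*?t1+?p2*?t2)/(2*?p1^2) - ?p2^2*?t1/?p1^3)"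
  proof -
    have "dx pt (x,t) = dx (\<lambda>w. T0 w/(lam*P1 w) - E3 w) (x,t)"
      by (rule dx_cong[OF oN zN]) (rule ptN)
    also have "\<dots> = (?t1*?p1 - ?t0*?p2)/(lam*?p1^2) - (A*?t2/?c - A^2*?p1*?t1/?c^2 - A^2*(?p2*?t0+?p1*?t1)/?c^2 + 2*A^3*?p1^2*?t0/?c^3 - ?t3/(2*?p1) + ?t2*?p2/(2*?p1^2) + (?p3*?t1+?p2*?t2)/(2*?p1^2) - ?p2^2*?t1/?p1^3)"
      unfolding E3_def
      by (rule dx_eq) (use P1nz0 cnz0 lam in \<open>auto intro!: derivative_eq_intros XC[OF NS[OF zN]]
            XP1[OF NS[OF zN]] XP2[OF NS[OF zN]] XT0[OF NS[OF zN]] XT1[OF NS[OF zN]] XT2[OF NS[OF zN]]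
            simp: field_simps power2_eq_square power3_eq_cube\<close>)
    finally show ?thesis .
  qed
  have Wt: "dt (\<lambda>w. 1 / V w) (x,t) = \<sigma>*?t1/(2*?q*?c) - A*?q*?t0/?c^2"
    unfolding Wfun
    by (rule dt_eq) (use Qnz0 cnz0 in \<open>auto intro!: derivative_eq_intros TQ[OF zN] TC[OF NS[OF zN]]
            simp: field_simps power2_eq_square\<close>)
  have schw: "schwarzian \<phi> = (\<lambda>w. P3 w / P1 w - 3/2 * (P2 w / P1 w)^2)"
    by (simp add: schwarzian_def P1_def P2_def P3_def)
  have dtschw: "dt (schwarzian \<phi>) (x,t) = ?t3/?p1 - ?p3*?t1/?p1^2 - 3*(?p2/?p1)*(?t2*?p1-?p2*?t1)/?p1^2"
    unfolding schw
    by (rule dt_eq) (use P1nz0 in \<open>auto intro!: derivative_eq_intros TP1[OF NS[OF zN]] TP2[OF NS[OF zN]]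
            TP3[OF NS[OF zN]] simp: field_simps power2_eq_square power3_eq_cube\<close>)
  have qx: "dx (\<lambda>w. dt \<phi> w / dx \<phi> w) (x,t) = (?t1*?p1 - ?t0*?p2)/?p1^2"
    unfolding T0_def[symmetric] P1_def[symmetric]
    by (rule dx_eq) (use P1nz0 in \<open>auto intro!: derivative_eq_intros XT0[OF NS[OF zN]] XP1[OF NS[OF zN]]
            simp: field_simps power2_eq_square\<close>)
  have pdez: "dt (schwarzian \<phi>) (x,t) + 4 / lam * dx (\<lambda>w. dt \<phi> w / dx \<phi> w) (x,t) = 0"
    using pde zS z by auto
  have Vz: "1 / V (x,t) = ?q / ?c" using fun_cong[OF Wfun, of "(x,t)"] by simp
  have ptz: "pt (x,t) = ?t0/(lam*?p1) - E3 (x,t)" by (rule ptN[OF zN])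
  have Utz: "Ut (x,t) = (1/2 * (?p3/?p1 - 3/2*(?p2/?p1)^2) + 1/lam) + 2 * (A*?p2/?c - A^2*?p1^2/?c^2 - ?p3/(2*?p1) + ?p2^2/(2*?p1^2))"
    unfolding Ut_def Lfun Lxx by (simp add: schw)
  have goal1: "dx (dx (\<lambda>w. 1 / V w)) (x,t) + (Ut (x,t) - 1 / lam) * (1 / V (x,t)) = 0"
    unfolding Wxx Utz Vz using alg1[OF sg Qnz0 cnz0 QQ[OF zN], of ?p3 ?p2 A lam] by simp
  have goal2: "dt (\<lambda>w. 1 / V w) (x,t) = lam * (pt (x,t) * dx (\<lambda>w. 1 / V w) (x,t) - 1/2 * dx pt (x,t) * (1 / V (x,t)))"
  proof -
    have "dt (\<lambda>w. 1 / V w) (x,t) - lam * (pt (x,t) * dx (\<lambda>w. 1 / V w) (x,t) - 1/2 * dx pt (x,t) * (1 / V (x,t)))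
       = lam/4 * (dt (schwarzian \<phi>) (x,t) + 4 / lam * dx (\<lambda>w. dt \<phi> w / dx \<phi> w) (x,t)) * (?q/?c)"
      unfolding Wt ptz Wx dxpt Vz dtschw qx
      using alg2[OF sg Qnz0 cnz0 lam QQ[OF zN], of ?t1 A ?t0 ?t2 ?p2 ?t3 ?p3]
      by (simp add: E1_def E3_def)
    also have "\<dots> = 0" using pdez by simp
    finally show ?thesis by simp
  qed
  show "dx (dx (\<lambda>w. 1 / V w)) z + (Ut z - 1 / lam) * (1 / V z) = 0
            \<and> dt (\<lambda>w. 1 / V w) z
                = lam * (pt z * dx (\<lambda>w. 1 / V w) z - 1/2 * dx pt z * (1 / V z))"
    using goal1 goal2 z by simp
qed


end
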